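(* Let $I$ be an index set and let $\mu,\nu$ be probability measures on $\bigotimes_{i\in I}\mathcal B(\mathbb R)$. Then $\mu$ and $\nu$ have a common underlying copula measure, i.e. there is a copula measure $C$ on $\mathbb R^I$ such that for every finite $J\subseteq I$ and all $(x_j)_{j\in J}\in\mathbb R^J$, $$F_{C_J}\big((F_{\mu_j}(x_j))_{j\in J}\big)=F_{\mu_J}\big((x_j)_{j\in J}\big)\quad\text{and}\quad F_{C_J}\big((F_{\nu_j}(x_j))_{j\in J}\big)=F_{\nu_J}\big((x_j)_{j\in J}\big),$$ if and only if there exist stochastic processes $X=(X_i)_{i\in I}$ and $Y=(Y_i)_{i\in I}$ on a common probability space $(\Omega,\mathcal F,\mathbb P)$ with $X\sim\mu$, $Y\sim\nu$, such that $X_i$ and $Y_i$ are similarly ordered for all $i\in I$, i.e. $$\big(X_i(\omega)-X_i(\omega')\big)\big(Y_i(\omega)-Y_i(\omega')\big)\ge 0\quad \mathbb P\otimes\mathbb P\text{-a.s.}$$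
   Context: For a measure $\rho$ on $(\mathbb R^I,\bigotimes_{i\in I}\mathcal B(\mathbb R))$ and $J\subseteq I$, $\rho_J$ is the pushforward of $\rho$ under the coordinate projection onto $\mathbb R^J$, $\rho_i:=\rho_{\{i\}}$, and for finite $J$, $F_{\rho_J}$ is the cumulative distribution function of $\rho_J$. A copula measure on $\mathbb R^I$ is a probability measure on $\bigotimes_{i\in I}\mathcal B(\mathbb R)$ all of whose one-dimensional marginals are uniform on $[0,1]$. *)

theory Defs
  imports "HOL-Probability.Probability"
begin

abbreviation RI :: "'i set \<Rightarrow> ('i \<Rightarrow> real) measure" where
  "RI I \<equiv> PiM I (\<lambda>_. borel)"

definition marg :: "('i \<Rightarrow> real) measure \<Rightarrow> 'i set \<Rightarrow> ('i \<Rightarrow> real) measure" where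
  "marg \<rho> J = distr \<rho> (RI J) (\<lambda>x. restrict x J)"

definition marg1 :: "('i \<Rightarrow> real) measure \<Rightarrow> 'i \<Rightarrow> real measure" where
  "marg1 \<rho> i = distr \<rho> borel (\<lambda>x. x i)"

definition cdfJ :: "('i \<Rightarrow> real) measure \<Rightarrow> 'i set \<Rightarrow> ('i \<Rightarrow> real) \<Rightarrow> real" where
  "cdfJ \<rho> J x = measure (marg \<rho> J) {y \<in> space (RI J). \<forall>j\<in>J. y j \<le> x j}"

definition cdf1 :: "('i \<Rightarrow> real) measure \<Rightarrow> 'i \<Rightarrow> real \<Rightarrow> real" where
  "cdf1 \<rho> i t = measure (marg1 \<rho> i) {..t}"

definition copula_measure :: "'i set \<Rightarrow> ('i \<Rightarrow> real) measure \<Rightarrow> bool" where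
  "copula_measure I C \<longleftrightarrow> prob_space C \<and> sets C = sets (RI I) \<and>
     (\<forall>i\<in>I. marg1 C i = uniform_measure lborel {0..1})"

definition underlying_copula :: "'i set \<Rightarrow> ('i \<Rightarrow> real) measure \<Rightarrow> ('i \<Rightarrow> real) measure \<Rightarrow> bool" where
  "underlying_copula I C \<mu> \<longleftrightarrow>
     (\<forall>J x. finite J \<longrightarrow> J \<subseteq> I \<longrightarrow>
        cdfJ C J (\<lambda>j. cdf1 \<mu> j (x j)) = cdfJ \<mu> J x)"

definition similarly_ordered_coupling ::
  "'i set \<Rightarrow> ('i \<Rightarrow> real) measure \<Rightarrow> ('i \<Rightarrow> real) measure \<Rightarrow> 'w measure
    \<Rightarrow> ('w \<Rightarrow> 'i \<Rightarrow> real) \<Rightarrow> ('w \<Rightarrow> 'i \<Rightarrow> real) \<Rightarrow> bool" where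
  "similarly_ordered_coupling I \<mu> \<nu> M X Y \<longleftrightarrow>
     prob_space M \<and>
     X \<in> measurable M (RI I) \<and> Y \<in> measurable M (RI I) \<and>
     distr M (RI I) X = \<mu> \<and> distr M (RI I) Y = \<nu> \<and>
     (\<forall>i\<in>I. AE p in M \<Otimes>\<^sub>M M.
        (X (fst p) i - X (snd p) i) * (Y (fst p) i - Y (snd p) i) \<ge> 0)"

end

theory Submission
  imports Defs
begin


lemma RI_le_sets: "i \<in> I \<Longrightarrow> {y\<in>space (RI I). y i \<le> a} \<in> sets (RI I)"
  by measurable

lemma RI_box_sets: "finite J \<Longrightarrow> J \<subseteq> I \<Longrightarrow> {y\<in>space (RI I). \<forall>j\<in>J. y j \<le> x j} \<in> sets (RI I)"
  by (intro sets.sets_Collect_finite_All) (auto intro!: RI_le_sets)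

lemma RI_gen_sets:
  fixes I :: "'i set"
  defines "E \<equiv> {{y\<in>space (RI I). \<forall>j\<in>J. y j \<le> x j} | J x. finite J \<and> J \<subseteq> I}"
  shows "sets (RI I) = sigma_sets (space (RI I)) E"
proof
  have "E \<subseteq> sets (RI I)"
  proof
    fix A assume "A \<in> E"
    then obtain J x where A: "A = {y\<in>space (RI I). \<forall>j\<in>J. y j \<le> x j}" "finite J" "J \<subseteq> I"
      unfolding E_def by (auto simp only: mem_Collect_eq)
    show "A \<in> sets (RI I)" unfolding A(1) using A(2,3) by (rule RI_box_sets)
  qed
  then show "sigma_sets (space (RI I)) E \<subseteq> sets (RI I)"
    by (intro sets.sigma_sets_subset)
  have Esub: "E \<subseteq> Pow (space (RI I))" unfolding E_def by blast
  have "sets (RI I) \<subseteq> sets (sigma (space (RI I)) E)"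
  proof (rule sets_PiM_in_sets)
    show "space (sigma (space (RI I)) E) = (\<Pi>\<^sub>E i\<in>I. space borel)"
      using space_measure_of[OF Esub] by (simp add: space_PiM)
    fix i A assume i: "i \<in> I" and A: "A \<in> sets (borel::real measure)"
    have "(\<lambda>y. y i) \<in> borel_measurable (sigma (space (RI I)) E)"
    proof (subst borel_measurable_iff_le, intro allI)
      fix a
      have "{w \<in> space (sigma (space (RI I)) E). w i \<le> a} = {y\<in>space (RI I). \<forall>j\<in>{i}. y j \<le> (\<lambda>_. a) j}"
        using space_measure_of[OF Esub] by simp
      also have "\<dots> \<in> E" unfolding E_def using i
        by (intro CollectI exI[of _ "{i}"] exI[of _ "\<lambda>_. a"]) simp
      finally show "{w \<in> space (sigma (space (RI I)) E). w i \<le> a} \<in> sets (sigma (space (RI I)) E)"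
        using sets_measure_of[OF Esub] sigma_sets.Basic by (metis (no_types, lifting))
    qed
    from measurable_sets[OF this A]
    show "{x \<in> space (sigma (space (RI I)) E). x i \<in> A} \<in> sets (sigma (space (RI I)) E)"
      by (simp add: vimage_def Int_def conj_commute)
  qed
  then show "sets (RI I) \<subseteq> sigma_sets (space (RI I)) E"
    using sets_measure_of[OF Esub] by simp
qed

lemma RI_eqI:
  fixes I :: "'i set" and A B :: "('i \<Rightarrow> real) measure"
  assumes A: "prob_space A" "sets A = sets (RI I)" and B: "prob_space B" "sets B = sets (RI I)"
    and eq: "\<And>J x. finite J \<Longrightarrow> J \<subseteq> I \<Longrightarrow>
       measure A {y\<in>space (RI I). \<forall>j\<in>J. y j \<le> x j} = measure B {y\<in>space (RI I). \<forall>j\<in>J. y j \<le> x j}"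
  shows "A = B"
proof -
  define E where "E = {{y\<in>space (RI I). \<forall>j\<in>J. y j \<le> x j} | J x. finite J \<and> J \<subseteq> I}"
  have gen: "sets (RI I) = sigma_sets (space (RI I)) E" unfolding E_def by (rule RI_gen_sets)
  interpret PA: prob_space A by (rule A)
  interpret PB: prob_space B by (rule B)
  show ?thesis
  proof (rule measure_eqI_generator_eq[where E=E and \<Omega>="space (RI I)" and A="\<lambda>_. space (RI I)"])
    show "Int_stable E"
    proof (rule Int_stableI)
      fix a b assume "a \<in> E" "b \<in> E"
      then obtain J x K y where a: "a = {y\<in>space (RI I). \<forall>j\<in>J. y j \<le> x j}" "finite J" "J \<subseteq> I"
        and b: "b = {z\<in>space (RI I). \<forall>j\<in>K. z j \<le> y j}" "finite K" "K \<subseteq> I"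
        unfolding E_def by (auto simp only: mem_Collect_eq)
      define z where "z = (\<lambda>j. if j \<in> J then (if j \<in> K then min (x j) (y j) else x j) else y j)"
      have "a \<inter> b = {w\<in>space (RI I). \<forall>j\<in>J \<union> K. w j \<le> z j}"
        unfolding a b z_def by auto
      moreover have "finite (J \<union> K)" "J \<union> K \<subseteq> I" using a b by auto
      ultimately show "a \<inter> b \<in> E" unfolding E_def
        by (intro CollectI exI[of _ "J \<union> K"] exI[of _ z]) simp
    qed
    show "E \<subseteq> Pow (space (RI I))" unfolding E_def by blast
    fix X assume "X \<in> E"
    then obtain J x where X: "X = {y\<in>space (RI I). \<forall>j\<in>J. y j \<le> x j}" "finite J" "J \<subseteq> I"
      unfolding E_def by (auto simp only: mem_Collect_eq)
    have "X \<in> sets A" "X \<in> sets B" using RI_box_sets[OF X(2,3)] A B X(1) by auto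
    then show "emeasure A X = emeasure B X"
      using eq[OF X(2,3)] X(1) by (simp add: PA.emeasure_eq_measure PB.emeasure_eq_measure)
  next
    show "sets A = sigma_sets (space (RI I)) E" using A gen by simp
    show "sets B = sigma_sets (space (RI I)) E" using B gen by simp
    have "space (RI I) \<in> E" unfolding E_def
      by (intro CollectI exI[of _ "{}"] exI[of _ "\<lambda>_. 0"]) simp
    then show "range (\<lambda>_. space (RI I)) \<subseteq> E" by auto
    show "(\<Union>i::nat. space (RI I)) = space (RI I)" by simp
    show "\<And>i::nat. emeasure A (space (RI I)) \<noteq> \<infinity>" by simp
  qed
qed




lemma space_RI_eq: "sets \<rho> = sets (RI I) \<Longrightarrow> space \<rho> = space (RI I)"
  by (rule sets_eq_imp_space_eq)

lemma comp_meas: "sets \<rho> = sets (RI I) \<Longrightarrow> j \<in> I \<Longrightarrow> (\<lambda>x. x j) \<in> borel_measurable \<rho>"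
  by (subst measurable_cong_sets[OF _ refl], assumption) simp

lemma marg1_real_dist: "prob_space \<rho> \<Longrightarrow> sets \<rho> = sets (RI I) \<Longrightarrow> j \<in> I \<Longrightarrow> real_distribution (marg1 \<rho> j)"
  unfolding marg1_def by (intro prob_space.real_distribution_distr comp_meas)

lemma cdf1_eq_cdf: "cdf1 \<rho> j = cdf (marg1 \<rho> j)"
  by (simp add: cdf1_def cdf_def fun_eq_iff)

lemma cdf1_meas:
  assumes "sets \<rho> = sets (RI I)" "j \<in> I"
  shows "cdf1 \<rho> j t = measure \<rho> {x\<in>space \<rho>. x j \<le> t}"
  unfolding cdf1_def marg1_def using comp_meas[OF assms]
  by (simp add: measure_distr vimage_def Int_def conj_commute)

lemma cdfJ_meas:
  assumes "sets \<rho> = sets (RI I)" "finite J" "J \<subseteq> I"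
  shows "cdfJ \<rho> J x = measure \<rho> {y\<in>space \<rho>. \<forall>j\<in>J. y j \<le> x j}"
proof -
  have m: "(\<lambda>y. restrict y J) \<in> measurable \<rho> (RI J)"
    by (subst measurable_cong_sets[OF assms(1) refl]) (rule measurable_restrict_subset[OF assms(3)])
  have s: "{z\<in>space (RI J). \<forall>j\<in>J. z j \<le> x j} \<in> sets (RI J)"
    by (rule RI_box_sets[OF assms(2) subset_refl])
  have "(\<lambda>y. restrict y J) -` {z\<in>space (RI J). \<forall>j\<in>J. z j \<le> x j} \<inter> space \<rho> = {y\<in>space \<rho>. \<forall>j\<in>J. y j \<le> x j}"
    using space_RI_eq[OF assms(1)] by (auto simp: space_PiM)
  then show ?thesis unfolding cdfJ_def marg_def using measure_distr[OF m s] by simp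
qed

lemma le_sets_of_meas: "f \<in> borel_measurable M \<Longrightarrow> {w\<in>space M. (f w::real) \<le> a} \<in> sets M"
  using borel_measurable_iff_le by blast

lemma AE_fst_lift:
  assumes "sigma_finite_measure B" "AE x in A. P x"
  shows "AE p in A \<Otimes>\<^sub>M B. P (fst p)"
proof -
  interpret B: sigma_finite_measure B by fact
  from assms(2) obtain N where N: "{x \<in> space A. \<not> P x} \<subseteq> N" "emeasure A N = 0" "N \<in> sets A"
    by (rule AE_E)
  have "N \<times> space B \<in> null_sets (A \<Otimes>\<^sub>M B)" using N by (intro B.times_in_null_sets1) auto
  moreover have "{p\<in>space (A \<Otimes>\<^sub>M B). \<not> P (fst p)} \<subseteq> N \<times> space B"
    using N by (auto simp: space_pair_measure)
  ultimately show ?thesis by (rule AE_I')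
qed

lemma AE_snd_lift:
  assumes "sigma_finite_measure B" "AE x in B. P x"
  shows "AE p in A \<Otimes>\<^sub>M B. P (snd p)"
proof -
  interpret B: sigma_finite_measure B by fact
  from assms(2) obtain N where N: "{x \<in> space B. \<not> P x} \<subseteq> N" "emeasure B N = 0" "N \<in> sets B"
    by (rule AE_E)
  have "space A \<times> N \<in> null_sets (A \<Otimes>\<^sub>M B)" using N by (intro B.times_in_null_sets2) auto
  moreover have "{p\<in>space (A \<Otimes>\<^sub>M B). \<not> P (snd p)} \<subseteq> space A \<times> N"
    using N by (auto simp: space_pair_measure)
  ultimately show ?thesis by (rule AE_I')
qed

definition Qt :: "real measure \<Rightarrow> real \<Rightarrow> real" where
  "Qt F u = (if u \<in> {0<..<1} then Inf {x. u \<le> cdf F x} else 0)"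

lemma Qt_galois:
  assumes "real_distribution F" "u \<in> {0<..<1}"
  shows "Qt F u \<le> x \<longleftrightarrow> u \<le> cdf F x"
proof -
  interpret cdf_distribution F using assms(1) by (simp add: cdf_distribution_def)
  show ?thesis using pseudoinverse[of u x] assms(2) by (simp add: Qt_def)
qed

lemma Qt_meas:
  assumes "real_distribution F"
  shows "Qt F \<in> borel_measurable borel"
proof -
  interpret cdf_distribution F using assms(1) by (simp add: cdf_distribution_def)
  have "(\<lambda>u. if u \<in> {0<..<1} then Inf {x. u \<le> cdf F x} else 0) \<in> borel_measurable borel"
  proof (subst measurable_If_restrict_space_iff)
    have e: "{x. x \<in> {0<..<1::real}} = {0<..<1}" by auto
    show "(\<lambda>u. Inf {x. u \<le> cdf F x}) \<in> borel_measurable (restrict_space borel {x. x \<in> {0<..<1::real}}) \<and>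
      (\<lambda>u. 0::real) \<in> borel_measurable (restrict_space borel {x. x \<notin> {0<..<1::real}})"
      unfolding e using measurable_CI by simp
  qed simp
  then show ?thesis unfolding Qt_def[abs_def] .
qed

lemma Qt_mono:
  assumes "real_distribution F" "u \<in> {0<..<1}" "v \<in> {0<..<1}" "u \<le> v"
  shows "Qt F u \<le> Qt F v"
proof -
  have "v \<le> cdf F (Qt F v)" using Qt_galois[OF assms(1,3), of "Qt F v"] by simp
  then show ?thesis using Qt_galois[OF assms(1,2)] assms(4) by simp
qed

lemma AE_copula_open:
  assumes C: "copula_measure I C" and j: "j \<in> I"
  shows "AE u in C. u j \<in> {0<..<1}"
proof -
  have sC: "sets C = sets (RI I)" and pC: "prob_space C" using C by (auto simp: copula_measure_def)
  have m: "marg1 C j = uniform_measure lborel {0..1}" using C j by (auto simp: copula_measure_def)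
  have "AE x in uniform_measure lborel {0..1::real}. x \<in> {0<..<1}"
  proof (rule AE_uniform_measureI)
    show "AE x in lborel. x \<in> {0..1::real} \<longrightarrow> x \<in> {0<..<1}"
      using AE_lborel_singleton[of "0::real"] AE_lborel_singleton[of "1::real"]
      by eventually_elim auto
  qed simp
  then have "AE x in marg1 C j. x \<in> {0<..<1}" unfolding m .
  then have "AE x in distr C borel (\<lambda>x. x j). x \<in> {0<..<1}" unfolding marg1_def .
  then show ?thesis
    by (subst (asm) AE_distr_iff) (auto intro: comp_meas[OF sC j])
qed

lemma law_from_copula:
  fixes I :: "'i set"
  assumes mu: "prob_space \<mu>" "sets \<mu> = sets (RI I)"
    and C: "copula_measure I C" "underlying_copula I C \<mu>"
  shows "distr C (RI I) (\<lambda>u. \<lambda>i\<in>I. Qt (marg1 \<mu> i) (u i)) = \<mu>"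
proof -
  have sC: "sets C = sets (RI I)" and pC: "prob_space C" using C by (auto simp: copula_measure_def)
  interpret PC: prob_space C by (rule pC)
  have rd: "\<And>i. i \<in> I \<Longrightarrow> real_distribution (marg1 \<mu> i)" using marg1_real_dist[OF mu] .
  have mq: "\<And>i. i \<in> I \<Longrightarrow> (\<lambda>u. Qt (marg1 \<mu> i) (u i)) \<in> borel_measurable C"
    by (rule measurable_compose[OF comp_meas[OF sC] Qt_meas[OF rd]])
  have mX: "(\<lambda>u. \<lambda>i\<in>I. Qt (marg1 \<mu> i) (u i)) \<in> measurable C (RI I)"
    by (rule measurable_restrict) (rule mq)
  show ?thesis
  proof (rule RI_eqI[where I=I])
    show "prob_space (distr C (RI I) (\<lambda>u. \<lambda>i\<in>I. Qt (marg1 \<mu> i) (u i)))"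
      by (rule PC.prob_space_distr[OF mX])
    show "sets (distr C (RI I) (\<lambda>u. \<lambda>i\<in>I. Qt (marg1 \<mu> i) (u i))) = sets (RI I)" by simp
    fix J x assume J: "finite J" "J \<subseteq> I"
    have box: "{y\<in>space (RI I). \<forall>j\<in>J. y j \<le> x j} \<in> sets (RI I)" by (rule RI_box_sets[OF J])
    have "measure (distr C (RI I) (\<lambda>u. \<lambda>i\<in>I. Qt (marg1 \<mu> i) (u i))) {y\<in>space (RI I). \<forall>j\<in>J. y j \<le> x j}
        = measure C {u\<in>space C. \<forall>j\<in>J. Qt (marg1 \<mu> j) (u j) \<le> x j}"
      using J measure_distr[OF mX box]
      by (auto intro!: arg_cong[where f="measure C"] simp: space_PiM)
    also have "\<dots> = measure C {u\<in>space C. \<forall>j\<in>J. u j \<le> cdf1 \<mu> j (x j)}"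
    proof (rule measure_eq_AE)
      have "AE u in C. \<forall>j\<in>J. u j \<in> {0<..<1}"
        using J by (intro AE_finite_allI AE_copula_open[OF C(1)]) auto
      then show "AE u in C. (u \<in> {u\<in>space C. \<forall>j\<in>J. Qt (marg1 \<mu> j) (u j) \<le> x j}) =
                            (u \<in> {u\<in>space C. \<forall>j\<in>J. u j \<le> cdf1 \<mu> j (x j)})"
      proof eventually_elim
        case (elim u)
        have "\<forall>j\<in>J. (Qt (marg1 \<mu> j) (u j) \<le> x j) = (u j \<le> cdf1 \<mu> j (x j))"
          using elim J unfolding cdf1_eq_cdf by (auto intro!: Qt_galois[OF rd])
        then show ?case by auto
      qed
      show "{u\<in>space C. \<forall>j\<in>J. Qt (marg1 \<mu> j) (u j) \<le> x j} \<in> sets C"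
        using J by (intro sets.sets_Collect_finite_All le_sets_of_meas mq) auto
      show "{u\<in>space C. \<forall>j\<in>J. u j \<le> cdf1 \<mu> j (x j)} \<in> sets C"
        using J by (intro sets.sets_Collect_finite_All le_sets_of_meas comp_meas[OF sC]) auto
    qed
    also have "\<dots> = cdfJ C J (\<lambda>j. cdf1 \<mu> j (x j))"
      using cdfJ_meas[OF sC J] by simp
    also have "\<dots> = cdfJ \<mu> J x" using C(2) J by (simp add: underlying_copula_def)
    also have "\<dots> = measure \<mu> {y\<in>space (RI I). \<forall>j\<in>J. y j \<le> x j}"
      using cdfJ_meas[OF mu(2) J] space_RI_eq[OF mu(2)] by simp
    finally show "measure (distr C (RI I) (\<lambda>u. \<lambda>i\<in>I. Qt (marg1 \<mu> i) (u i))) {y\<in>space (RI I). \<forall>j\<in>J. y j \<le> x j}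
        = measure \<mu> {y\<in>space (RI I). \<forall>j\<in>J. y j \<le> x j}" .
  qed (use mu in auto)
qed




lemma dir1:
  fixes I :: "'i set" and \<mu> \<nu> :: "('i \<Rightarrow> real) measure"
  assumes mu: "prob_space \<mu>" "sets \<mu> = sets (RI I)" and nu: "prob_space \<nu>" "sets \<nu> = sets (RI I)"
    and C: "copula_measure I C" "underlying_copula I C \<mu>" "underlying_copula I C \<nu>"
  shows "\<exists>(M :: (('i \<Rightarrow> real) \<times> ('i \<Rightarrow> real)) measure) X Y. similarly_ordered_coupling I \<mu> \<nu> M X Y"
proof -
  have sC: "sets C = sets (RI I)" and pC: "prob_space C" using C by (auto simp: copula_measure_def)
  interpret PC: prob_space C by (rule pC)
  have pCC: "prob_space (C \<Otimes>\<^sub>M C)" by (rule prob_space_pair[OF pC pC])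
  interpret PCC: prob_space "C \<Otimes>\<^sub>M C" by (rule pCC)
  define X0 where "X0 = (\<lambda>u. \<lambda>i\<in>I. Qt (marg1 \<mu> i) (u i))"
  define Y0 where "Y0 = (\<lambda>u. \<lambda>i\<in>I. Qt (marg1 \<nu> i) (u i))"
  have rdm: "\<And>i. i \<in> I \<Longrightarrow> real_distribution (marg1 \<mu> i)" using marg1_real_dist[OF mu] .
  have rdn: "\<And>i. i \<in> I \<Longrightarrow> real_distribution (marg1 \<nu> i)" using marg1_real_dist[OF nu] .
  have mX0: "X0 \<in> measurable C (RI I)" unfolding X0_def
    by (rule measurable_restrict) (rule measurable_compose[OF comp_meas[OF sC] Qt_meas[OF rdm]])
  have mY0: "Y0 \<in> measurable C (RI I)" unfolding Y0_def
    by (rule measurable_restrict) (rule measurable_compose[OF comp_meas[OF sC] Qt_meas[OF rdn]])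
  have mX: "(\<lambda>p. X0 (fst p)) \<in> measurable (C \<Otimes>\<^sub>M C) (RI I)"
    by (rule measurable_compose[OF measurable_fst mX0])
  have mY: "(\<lambda>p. Y0 (fst p)) \<in> measurable (C \<Otimes>\<^sub>M C) (RI I)"
    by (rule measurable_compose[OF measurable_fst mY0])
  have dX: "distr (C \<Otimes>\<^sub>M C) (RI I) (\<lambda>p. X0 (fst p)) = \<mu>"
  proof -
    have "distr (C \<Otimes>\<^sub>M C) (RI I) (\<lambda>p. X0 (fst p)) = distr (distr (C \<Otimes>\<^sub>M C) C fst) (RI I) X0"
      by (subst distr_distr[OF mX0 measurable_fst]) (simp add: comp_def)
    also have "\<dots> = distr C (RI I) X0" by (simp add: PC.distr_pair_fst)
    also have "\<dots> = \<mu>" unfolding X0_def by (rule law_from_copula[OF mu C(1,2)])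
    finally show ?thesis .
  qed
  have dY: "distr (C \<Otimes>\<^sub>M C) (RI I) (\<lambda>p. Y0 (fst p)) = \<nu>"
  proof -
    have "distr (C \<Otimes>\<^sub>M C) (RI I) (\<lambda>p. Y0 (fst p)) = distr (distr (C \<Otimes>\<^sub>M C) C fst) (RI I) Y0"
      by (subst distr_distr[OF mY0 measurable_fst]) (simp add: comp_def)
    also have "\<dots> = distr C (RI I) Y0" by (simp add: PC.distr_pair_fst)
    also have "\<dots> = \<nu>" unfolding Y0_def by (rule law_from_copula[OF nu C(1,3)])
    finally show ?thesis .
  qed
  have so: "\<forall>i\<in>I. AE q in (C \<Otimes>\<^sub>M C) \<Otimes>\<^sub>M (C \<Otimes>\<^sub>M C).
     (X0 (fst (fst q)) i - X0 (fst (snd q)) i) * (Y0 (fst (fst q)) i - Y0 (fst (snd q)) i) \<ge> 0"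
  proof
    fix i assume i: "i \<in> I"
    have a: "AE p in C \<Otimes>\<^sub>M C. fst p i \<in> {0<..<1}"
      by (rule AE_fst_lift[OF PC.sigma_finite_measure_axioms AE_copula_open[OF C(1) i]])
    have b1: "AE q in (C \<Otimes>\<^sub>M C) \<Otimes>\<^sub>M (C \<Otimes>\<^sub>M C). fst (fst q) i \<in> {0<..<1}"
      by (rule AE_fst_lift[OF PCC.sigma_finite_measure_axioms a])
    have b2: "AE q in (C \<Otimes>\<^sub>M C) \<Otimes>\<^sub>M (C \<Otimes>\<^sub>M C). fst (snd q) i \<in> {0<..<1}"
      by (rule AE_snd_lift[OF PCC.sigma_finite_measure_axioms a])
    from b1 b2 show "AE q in (C \<Otimes>\<^sub>M C) \<Otimes>\<^sub>M (C \<Otimes>\<^sub>M C).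
     (X0 (fst (fst q)) i - X0 (fst (snd q)) i) * (Y0 (fst (fst q)) i - Y0 (fst (snd q)) i) \<ge> 0"
    proof eventually_elim
      case (elim q)
      define a where "a = fst (fst q) i"
      define b where "b = fst (snd q) i"
      have ab: "a \<in> {0<..<1}" "b \<in> {0<..<1}" using elim by (auto simp: a_def b_def)
      have e: "X0 (fst (fst q)) i = Qt (marg1 \<mu> i) a" "X0 (fst (snd q)) i = Qt (marg1 \<mu> i) b"
        "Y0 (fst (fst q)) i = Qt (marg1 \<nu> i) a" "Y0 (fst (snd q)) i = Qt (marg1 \<nu> i) b"
        using i by (auto simp: X0_def Y0_def a_def b_def)
      show ?case
      proof (cases "a \<le> b")
        case True
        then have "Qt (marg1 \<mu> i) a \<le> Qt (marg1 \<mu> i) b" "Qt (marg1 \<nu> i) a \<le> Qt (marg1 \<nu> i) b"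
          using Qt_mono[OF rdm[OF i] ab] Qt_mono[OF rdn[OF i] ab] by auto
        then show ?thesis unfolding e by (intro mult_nonpos_nonpos) auto
      next
        case False
        then have "Qt (marg1 \<mu> i) b \<le> Qt (marg1 \<mu> i) a" "Qt (marg1 \<nu> i) b \<le> Qt (marg1 \<nu> i) a"
          using Qt_mono[OF rdm[OF i] ab(2,1)] Qt_mono[OF rdn[OF i] ab(2,1)] by auto
        then show ?thesis unfolding e by (intro mult_nonneg_nonneg) auto
      qed
    qed
  qed
  show ?thesis
    apply (rule exI[of _ "C \<Otimes>\<^sub>M C"], rule exI[of _ "\<lambda>p. X0 (fst p)"], rule exI[of _ "\<lambda>p. Y0 (fst p)"])
    unfolding similarly_ordered_coupling_def using pCC mX mY dX dY so by simp
qed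



definition U01 :: "real measure" where "U01 = restrict_space lborel {0..1}"
lemma space_U01[simp]: "space U01 = {0..1}"
  by (simp add: U01_def space_restrict_space)
lemma meas_id_U01: "(\<lambda>v. v) \<in> borel_measurable U01"
  unfolding U01_def by (intro measurable_restrict_space1) simp
lemma meas_snd_U01[measurable]: "snd \<in> borel_measurable (N \<Otimes>\<^sub>M U01)"
  by (rule measurable_compose[OF measurable_snd meas_id_U01])
lemma sets_U01_Icc: "0 \<le> c \<Longrightarrow> c \<le> 1 \<Longrightarrow> {0..c} \<in> sets U01"
  unfolding U01_def by (subst sets_restrict_space_iff) auto

lemma measure_U01_Icc: "0 \<le> c \<Longrightarrow> c \<le> 1 \<Longrightarrow> measure U01 {0..c} = c"
  unfolding U01_def by (subst measure_restrict_space) auto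

lemma prob_U01: "prob_space U01"
  unfolding U01_def by (auto simp: emeasure_restrict_space space_restrict_space intro!: prob_spaceI)

lemma rect_meas:
  assumes "finite_measure N" "A \<in> sets N" "B \<in> sets U01"
  shows "measure (N \<Otimes>\<^sub>M U01) (A \<times> B) = measure N A * measure U01 B"
proof -
  interpret U: prob_space U01 by (rule prob_U01)
  interpret N: finite_measure N by fact
  have "emeasure (N \<Otimes>\<^sub>M U01) (A \<times> B) = emeasure N A * emeasure U01 B"
    by (rule U.emeasure_pair_measure_Times[OF assms(2,3)])
  then have "measure (N \<Otimes>\<^sub>M U01) (A \<times> B) = enn2real (emeasure N A * emeasure U01 B)"
    by (simp only: measure_def)
  also have "\<dots> = enn2real (emeasure N A) * enn2real (emeasure U01 B)" by (rule enn2real_mult)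
  finally show ?thesis by (simp only: measure_def)
qed
definition Fc :: "'w measure \<Rightarrow> ('w \<Rightarrow> real) \<Rightarrow> real \<Rightarrow> real" where
  "Fc M Z z = measure M {\<omega>\<in>space M. Z \<omega> \<le> z}"
definition Fm :: "'w measure \<Rightarrow> ('w \<Rightarrow> real) \<Rightarrow> real \<Rightarrow> real" where
  "Fm M Z z = measure M {\<omega>\<in>space M. Z \<omega> < z}"
definition DT :: "'w measure \<Rightarrow> ('w \<Rightarrow> real) \<Rightarrow> 'w \<times> real \<Rightarrow> real" where
  "DT M Z w = Fm M Z (Z (fst w)) + snd w * (Fc M Z (Z (fst w)) - Fm M Z (Z (fst w)))"

locale dtf = prob_space M for M :: "'w measure" +
  fixes Z :: "'w \<Rightarrow> real"
  assumes mZ[measurable]: "Z \<in> borel_measurable M"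
begin

lemma Fc_mono: "a \<le> b \<Longrightarrow> Fc M Z a \<le> Fc M Z b"
  unfolding Fc_def by (intro finite_measure_mono) auto
lemma Fm_mono: "a \<le> b \<Longrightarrow> Fm M Z a \<le> Fm M Z b"
  unfolding Fm_def by (intro finite_measure_mono) auto
lemma Fm_le_Fc: "Fm M Z a \<le> Fc M Z a"
  unfolding Fm_def Fc_def by (intro finite_measure_mono) auto
lemma Fc_le_Fm: "a < b \<Longrightarrow> Fc M Z a \<le> Fm M Z b"
  unfolding Fm_def Fc_def by (intro finite_measure_mono) auto
lemma Fc_le1: "Fc M Z a \<le> 1" unfolding Fc_def by (rule prob_le_1)
lemma Fm_nonneg: "0 \<le> Fm M Z a" unfolding Fm_def by simp

lemma Fc_meas[measurable]: "Fc M Z \<in> borel_measurable borel"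
  by (intro borel_measurable_mono monoI Fc_mono)
lemma Fm_meas[measurable]: "Fm M Z \<in> borel_measurable borel"
  by (intro borel_measurable_mono monoI Fm_mono)

lemma DT_meas[measurable]: "DT M Z \<in> borel_measurable (M \<Otimes>\<^sub>M U01)"
  unfolding DT_def[abs_def] by measurable

lemma DT_bounds:
  assumes "snd w \<in> {0..1}"
  shows "Fm M Z (Z (fst w)) \<le> DT M Z w" "DT M Z w \<le> Fc M Z (Z (fst w))"
proof -
  let ?a = "Fm M Z (Z (fst w))" and ?b = "Fc M Z (Z (fst w))"
  have ab: "?a \<le> ?b" by (rule Fm_le_Fc)
  have "0 \<le> snd w * (?b - ?a)" using assms ab by (intro mult_nonneg_nonneg) auto
  moreover have "snd w * (?b - ?a) \<le> ?b - ?a" using assms ab by (intro mult_left_le_one_le) auto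
  ultimately show "?a \<le> DT M Z w" "DT M Z w \<le> ?b" unfolding DT_def by auto
qed

lemma rd: "real_distribution (distr M borel Z)" by simp

lemma cdf_rho: "cdf (distr M borel Z) z = Fc M Z z"
  unfolding cdf_def Fc_def by (subst measure_distr) (auto intro!: arg_cong[where f="measure M"])

lemma lt_rho: "measure (distr M borel Z) {..<z} = Fm M Z z"
  unfolding Fm_def by (subst measure_distr) (auto intro!: arg_cong[where f="measure M"])

lemma galois: "s \<in> {0<..<1} \<Longrightarrow> s \<le> Fc M Z z \<longleftrightarrow> Qt (distr M borel Z) s \<le> z"
  using Qt_galois[OF rd] cdf_rho by simp

lemma F2:
  assumes s: "s \<in> {0<..<1}"
  shows "Fm M Z (Qt (distr M borel Z) s) \<le> s"
proof -
  let ?z = "Qt (distr M borel Z) s"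
  interpret R: real_distribution "distr M borel Z" by (rule rd)
  have "(cdf (distr M borel Z) \<longlongrightarrow> measure (distr M borel Z) {..<?z}) (at_left ?z)"
    by (rule R.cdf_at_left)
  moreover have "eventually (\<lambda>z. cdf (distr M borel Z) z \<le> s) (at_left ?z)"
  proof (rule eventually_at_leftI[of "?z - 1"])
    fix z assume "z \<in> {?z - 1<..<?z}"
    then have "\<not> s \<le> Fc M Z z" using galois[OF s, of z] by auto
    then show "cdf (distr M borel Z) z \<le> s" using cdf_rho by simp
  qed simp
  ultimately have "measure (distr M borel Z) {..<?z} \<le> s"
    by (intro tendsto_upperbound) auto
  then show ?thesis using lt_rho by simp
qed

end




context dtf begin

lemma PMU: "prob_space (M \<Otimes>\<^sub>M U01)" by (rule prob_space_pair[OF prob_space_axioms prob_U01])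

lemma key:
  assumes s: "s \<in> {0<..<1}"
  shows "measure (M \<Otimes>\<^sub>M U01) {w\<in>space (M \<Otimes>\<^sub>M U01). DT M Z w < s} \<le> s"
    and "s \<le> measure (M \<Otimes>\<^sub>M U01) {w\<in>space (M \<Otimes>\<^sub>M U01). DT M Z w \<le> s}"
proof -
  interpret P: prob_space "M \<Otimes>\<^sub>M U01" by (rule PMU)
  define zs where "zs = Qt (distr M borel Z) s"
  define a where "a = Fm M Z zs"
  define b where "b = Fc M Z zs"
  define D where "D = b - a"
  define c where "c = (if D > 0 then (s - a) / D else 1)"
  have gal: "\<And>z. s \<le> Fc M Z z \<longleftrightarrow> zs \<le> z" unfolding zs_def using galois[OF s] .
  have sb: "s \<le> b" unfolding b_def using gal by simp
  have as: "a \<le> s" unfolding a_def zs_def by (rule F2[OF s])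
  have D0: "0 \<le> D" unfolding D_def a_def b_def using Fm_le_Fc by simp
  have c01: "0 \<le> c" "c \<le> 1"
    unfolding c_def using as sb by (auto simp: D_def field_simps)
  have sum: "a + D * c = s" unfolding c_def using as sb D0 by (auto simp: D_def)
  define A1 where "A1 = {\<omega>\<in>space M. Z \<omega> < zs} \<times> {0..1::real}"
  define A2 where "A2 = {\<omega>\<in>space M. Z \<omega> = zs} \<times> {0..c}"
  have A1s: "A1 \<in> sets (M \<Otimes>\<^sub>M U01)" unfolding A1_def using sets_U01_Icc[of 1]
    by (intro pair_measureI) auto
  have A2s: "A2 \<in> sets (M \<Otimes>\<^sub>M U01)" unfolding A2_def using sets_U01_Icc[OF c01]
    by (intro pair_measureI) auto
  have disj: "A1 \<inter> A2 = {}" by (auto simp: A1_def A2_def)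
  have mA1: "measure (M \<Otimes>\<^sub>M U01) A1 = a" unfolding A1_def a_def Fm_def
    by (subst rect_meas) (auto simp: measure_U01_Icc finite_measure_axioms sets_U01_Icc)
  have eqset: "{\<omega>\<in>space M. Z \<omega> = zs} = {\<omega>\<in>space M. Z \<omega> \<le> zs} - {\<omega>\<in>space M. Z \<omega> < zs}" by auto
  have mEq: "measure M {\<omega>\<in>space M. Z \<omega> = zs} = D" unfolding D_def a_def b_def Fc_def Fm_def eqset
    by (rule finite_measure_Diff) auto
  have mA2: "measure (M \<Otimes>\<^sub>M U01) A2 = D * c" unfolding A2_def
    by (subst rect_meas) (auto simp: mEq measure_U01_Icc c01 sets_U01_Icc finite_measure_axioms)
  have mB: "measure (M \<Otimes>\<^sub>M U01) (A1 \<union> A2) = s"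
    using P.finite_measure_Union[OF A1s A2s disj] mA1 mA2 sum by simp
  have sub1: "{w\<in>space (M \<Otimes>\<^sub>M U01). DT M Z w < s} \<subseteq> A1 \<union> A2"
  proof
    fix w assume w: "w \<in> {w\<in>space (M \<Otimes>\<^sub>M U01). DT M Z w < s}"
    obtain \<omega> v where wv: "w = (\<omega>, v)" by (cases w)
    have om: "\<omega> \<in> space M" "v \<in> {0..1}" using w wv by (auto simp: space_pair_measure)
    have lt: "DT M Z (\<omega>, v) < s" using w wv by simp
    consider "Z \<omega> < zs" | "Z \<omega> = zs" | "zs < Z \<omega>" by linarith
    then show "w \<in> A1 \<union> A2"
    proof cases
      case 1 then show ?thesis using om wv by (auto simp: A1_def)
    next
      case 2
      have "a + v * D < a + D * c" using lt 2 sum unfolding DT_def a_def b_def D_def by simp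
      then have "v * D < c * D" by (simp add: mult.commute)
      then have "v \<le> c"
      proof (cases "D > 0")
        case True
        then show ?thesis using \<open>v * D < c * D\<close> by (simp add: mult_less_cancel_right)
      next
        case False
        then show ?thesis using om by (simp add: c_def)
      qed
      then show ?thesis using 2 om wv by (auto simp: A2_def)
    next
      case 3
      have "Fc M Z zs \<le> Fm M Z (Z \<omega>)" by (rule Fc_le_Fm[OF 3])
      moreover have "Fm M Z (Z \<omega>) \<le> DT M Z (\<omega>,v)" using DT_bounds(1)[of "(\<omega>,v)"] om by simp
      ultimately have False using lt sb b_def by simp
      then show ?thesis ..
    qed
  qed
  have sub2: "A1 \<union> A2 \<subseteq> {w\<in>space (M \<Otimes>\<^sub>M U01). DT M Z w \<le> s}"
  proof
    fix w assume w: "w \<in> A1 \<union> A2"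
    obtain \<omega> v where wv: "w = (\<omega>, v)" by (cases w)
    show "w \<in> {w\<in>space (M \<Otimes>\<^sub>M U01). DT M Z w \<le> s}"
    proof (cases "w \<in> A1")
      case True
      then have om: "\<omega> \<in> space M" "v \<in> {0..1}" "Z \<omega> < zs" using wv by (auto simp: A1_def)
      have "DT M Z (\<omega>,v) \<le> Fc M Z (Z \<omega>)" using DT_bounds(2)[of "(\<omega>,v)"] om by simp
      moreover have "Fc M Z (Z \<omega>) < s" using gal[of "Z \<omega>"] om by linarith
      ultimately show ?thesis using om wv by (auto simp: space_pair_measure)
    next
      case False
      then have om: "\<omega> \<in> space M" "v \<in> {0..c}" "Z \<omega> = zs" using w wv by (auto simp: A2_def)
      have "DT M Z (\<omega>,v) = a + v * D" unfolding DT_def a_def b_def D_def using om by simp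
      also have "\<dots> \<le> a + c * D" using om D0 by (auto intro: mult_right_mono)
      finally have "DT M Z (\<omega>,v) \<le> s" using sum by (simp add: mult.commute)
      moreover have "v \<in> {0..1}" using om c01 by auto
      ultimately show ?thesis using om wv by (auto simp: space_pair_measure)
    qed
  qed
  have Bs: "A1 \<union> A2 \<in> sets (M \<Otimes>\<^sub>M U01)" using A1s A2s by auto
  show "measure (M \<Otimes>\<^sub>M U01) {w\<in>space (M \<Otimes>\<^sub>M U01). DT M Z w < s} \<le> s"
    using P.finite_measure_mono[OF sub1 Bs] mB by simp
  have "{w\<in>space (M \<Otimes>\<^sub>M U01). DT M Z w \<le> s} \<in> sets (M \<Otimes>\<^sub>M U01)" by measurable
  then show "s \<le> measure (M \<Otimes>\<^sub>M U01) {w\<in>space (M \<Otimes>\<^sub>M U01). DT M Z w \<le> s}"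
    using P.finite_measure_mono[OF sub2] mB by simp
qed

end




context dtf begin

lemma DT_cdf:
  assumes s: "0 \<le> s" "s \<le> 1"
  shows "measure (M \<Otimes>\<^sub>M U01) {w\<in>space (M \<Otimes>\<^sub>M U01). DT M Z w \<le> s} = s"
proof -
  interpret P: prob_space "M \<Otimes>\<^sub>M U01" by (rule PMU)
  show ?thesis
  proof (cases "s = 1")
    case True
    have "{w\<in>space (M \<Otimes>\<^sub>M U01). DT M Z w \<le> s} = space (M \<Otimes>\<^sub>M U01)"
    proof safe
      fix w assume "w \<in> space (M \<Otimes>\<^sub>M U01)"
      then have "snd w \<in> {0..1}" by (auto simp: space_pair_measure)
      then show "DT M Z w \<le> s" using DT_bounds(2)[of w] Fc_le1[of "Z (fst w)"] True by simp
    qed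
    then show ?thesis using True P.prob_space by simp
  next
    case False
    let ?G = "measure (M \<Otimes>\<^sub>M U01) {w\<in>space (M \<Otimes>\<^sub>M U01). DT M Z w \<le> s}"
    have ge: "s \<le> ?G"
    proof (cases "s = 0")
      case True then show ?thesis by simp
    next
      case False then show ?thesis using key(2)[of s] s \<open>s \<noteq> 1\<close> by auto
    qed
    have le: "?G \<le> s"
    proof (rule dense_ge_bounded[of s 1])
      show "s < 1" using s False by simp
      fix r assume r: "s < r" "r < 1"
      have "?G \<le> measure (M \<Otimes>\<^sub>M U01) {w\<in>space (M \<Otimes>\<^sub>M U01). DT M Z w < r}"
        by (intro P.finite_measure_mono) (use r in auto)
      also have "\<dots> \<le> r" using key(1)[of r] r s by auto
      finally show "?G \<le> r" .
    qed
    show ?thesis using ge le by simp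
  qed
qed

lemma real_dist_unif: "real_distribution (uniform_measure lborel {0..1::real})"
proof -
  have "prob_space (uniform_measure lborel {0..1::real})"
    by (rule prob_space_uniform_measure) auto
  then show ?thesis
    by (simp add: real_distribution_def real_distribution_axioms_def)
qed

lemma DT_uniform: "distr (M \<Otimes>\<^sub>M U01) borel (DT M Z) = uniform_measure lborel {0..1}"
proof (rule cdf_unique)
  interpret P: prob_space "M \<Otimes>\<^sub>M U01" by (rule PMU)
  show "real_distribution (distr (M \<Otimes>\<^sub>M U01) borel (DT M Z))" by simp
  show "real_distribution (uniform_measure lborel {0..1::real})" by (rule real_dist_unif)
  show "cdf (distr (M \<Otimes>\<^sub>M U01) borel (DT M Z)) = cdf (uniform_measure lborel {0..1})"
  proof
    fix s :: real
    have l: "cdf (distr (M \<Otimes>\<^sub>M U01) borel (DT M Z)) s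
        = measure (M \<Otimes>\<^sub>M U01) {w\<in>space (M \<Otimes>\<^sub>M U01). DT M Z w \<le> s}"
      unfolding cdf_def by (subst measure_distr) (auto intro!: arg_cong[where f="measure (M \<Otimes>\<^sub>M U01)"])
    have r: "cdf (uniform_measure lborel {0..1}) s = measure lborel ({0..1} \<inter> {..s})"
      unfolding cdf_def by (subst measure_uniform_measure) auto
    consider "s < 0" | "0 \<le> s" "s \<le> 1" | "1 < s" by linarith
    then show "cdf (distr (M \<Otimes>\<^sub>M U01) borel (DT M Z)) s = cdf (uniform_measure lborel {0..1}) s"
    proof cases
      case 1
      have emp: "{w\<in>space (M \<Otimes>\<^sub>M U01). DT M Z w \<le> s} = {}"
      proof safe
        fix w assume "w \<in> space (M \<Otimes>\<^sub>M U01)" "DT M Z w \<le> s"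
        then have "snd w \<in> {0..1}" by (auto simp: space_pair_measure)
        then show "w \<in> {}" using DT_bounds(1)[of w] Fm_nonneg[of "Z (fst w)"] 1 \<open>DT M Z w \<le> s\<close> by simp
      qed
      have e2: "{0..1} \<inter> {..s} = ({}::real set)" using 1 by auto
      show ?thesis unfolding l r emp e2 by simp
    next
      case 2
      have "{0..1} \<inter> {..s} = {0..s}" using 2 by auto
      then show ?thesis using l r DT_cdf[OF 2] 2 by simp
    next
      case 3
      have "{w\<in>space (M \<Otimes>\<^sub>M U01). DT M Z w \<le> s} = {w\<in>space (M \<Otimes>\<^sub>M U01). DT M Z w \<le> 1}"
      proof safe
        fix w assume "w \<in> space (M \<Otimes>\<^sub>M U01)"
        then have "snd w \<in> {0..1}" by (auto simp: space_pair_measure)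
        then show "DT M Z w \<le> s" "DT M Z w \<le> 1"
          using DT_bounds(2)[of w] Fc_le1[of "Z (fst w)"] 3 by auto
      qed
      moreover have "{0..1} \<inter> {..s} = {0..1::real}" using 3 by auto
      ultimately show ?thesis using l r DT_cdf[of 1] by simp
    qed
  qed
qed

lemma DT_ord:
  fixes X Y :: "'w \<Rightarrow> real"
  assumes mX[measurable]: "X \<in> borel_measurable M" and mY[measurable]: "Y \<in> borel_measurable M"
   and Zeq: "\<And>\<omega>. \<omega> \<in> space M \<Longrightarrow> Z \<omega> = X \<omega> + Y \<omega>"
   and so: "AE q in M \<Otimes>\<^sub>M M. (X (fst q) - X (snd q)) * (Y (fst q) - Y (snd q)) \<ge> 0"
  shows "AE w in M \<Otimes>\<^sub>M U01. (X (fst w) \<le> t) \<longleftrightarrow> (DT M Z w \<le> measure M {\<omega>\<in>space M. X \<omega> \<le> t})"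
proof -
  interpret P: prob_space "M \<Otimes>\<^sub>M U01" by (rule PMU)
  interpret U: prob_space U01 by (rule prob_U01)
  interpret PMM: pair_sigma_finite M M by unfold_locales
  define p where "p = measure M {\<omega>\<in>space M. X \<omega> \<le> t}"
  have "AE \<omega> in M. AE \<omega>' in M. (X \<omega> - X \<omega>') * (Y \<omega> - Y \<omega>') \<ge> 0"
    using PMM.AE_pair[OF so] by simp
  with AE_space have "AE \<omega> in M. \<omega> \<in> space M \<and> (AE \<omega>' in M. (X \<omega> - X \<omega>') * (Y \<omega> - Y \<omega>') \<ge> 0)"
    by eventually_elim auto
  then have A1: "AE \<omega> in M. Fc M Z (Z \<omega>) \<le> measure M {\<omega>'\<in>space M. X \<omega>' \<le> X \<omega>}"
  proof eventually_elim
    case (elim \<omega>)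
    then have om: "\<omega> \<in> space M" and ae: "AE \<omega>' in M. (X \<omega> - X \<omega>') * (Y \<omega> - Y \<omega>') \<ge> 0" by auto
    show ?case unfolding Fc_def
    proof (rule finite_measure_mono_AE)
      from ae AE_space show "AE \<omega>' in M. \<omega>' \<in> {\<omega>'\<in>space M. Z \<omega>' \<le> Z \<omega>} \<longrightarrow> \<omega>' \<in> {\<omega>'\<in>space M. X \<omega>' \<le> X \<omega>}"
      proof eventually_elim
        case (elim \<omega>')
        show ?case
        proof (intro impI)
          assume "\<omega>' \<in> {\<omega>'\<in>space M. Z \<omega>' \<le> Z \<omega>}"
          then have om': "\<omega>' \<in> space M" "Z \<omega>' \<le> Z \<omega>" by auto
          have "X \<omega>' \<le> X \<omega>"
          proof (rule ccontr)
            assume "\<not> X \<omega>' \<le> X \<omega>"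
            then have "X \<omega> - X \<omega>' < 0" by simp
            with elim(1) have "Y \<omega> - Y \<omega>' \<le> 0" using zero_le_mult_iff[of "X \<omega> - X \<omega>'" "Y \<omega> - Y \<omega>'"] by auto
            with \<open>X \<omega> - X \<omega>' < 0\<close> om' Zeq[OF om] Zeq[OF om'(1)] show False by simp
          qed
          then show "\<omega>' \<in> {\<omega>'\<in>space M. X \<omega>' \<le> X \<omega>}" using om' by simp
        qed
      qed
      show "{\<omega>'\<in>space M. X \<omega>' \<le> X \<omega>} \<in> sets M" by measurable
    qed
  qed
  with AE_space have A1': "AE \<omega> in M. \<omega> \<in> space M \<and> Fc M Z (Z \<omega>) \<le> measure M {\<omega>'\<in>space M. X \<omega>' \<le> X \<omega>}"
    by eventually_elim auto
  have A2: "AE w in M \<Otimes>\<^sub>M U01. X (fst w) \<le> t \<longrightarrow> DT M Z w \<le> p"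
    using AE_fst_lift[OF U.sigma_finite_measure_axioms A1'] AE_space
  proof eventually_elim
    case (elim w)
    then have sw: "snd w \<in> {0..1}" and fw: "fst w \<in> space M" by (auto simp: space_pair_measure)
    show ?case
    proof
      assume Xt: "X (fst w) \<le> t"
      have "DT M Z w \<le> Fc M Z (Z (fst w))" by (rule DT_bounds(2)[OF sw])
      also have "\<dots> \<le> measure M {\<omega>'\<in>space M. X \<omega>' \<le> X (fst w)}" using elim by simp
      also have "\<dots> \<le> p" unfolding p_def using Xt by (intro finite_measure_mono) auto
      finally show "DT M Z w \<le> p" .
    qed
  qed
  define E1 where "E1 = {w\<in>space (M \<Otimes>\<^sub>M U01). X (fst w) \<le> t}"
  define E2 where "E2 = {w\<in>space (M \<Otimes>\<^sub>M U01). DT M Z w \<le> p}"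
  have E1s: "E1 \<in> sets (M \<Otimes>\<^sub>M U01)" unfolding E1_def by measurable
  have E2s: "E2 \<in> sets (M \<Otimes>\<^sub>M U01)" unfolding E2_def by measurable
  have E1eq: "E1 = {\<omega>\<in>space M. X \<omega> \<le> t} \<times> {0..1}" unfolding E1_def by (auto simp: space_pair_measure)
  have mE1: "measure (M \<Otimes>\<^sub>M U01) E1 = p" unfolding E1eq p_def
    by (subst rect_meas) (auto simp: measure_U01_Icc sets_U01_Icc finite_measure_axioms)
  have p01: "0 \<le> p" "p \<le> 1" unfolding p_def by auto
  have mE2: "measure (M \<Otimes>\<^sub>M U01) E2 = p" unfolding E2_def by (rule DT_cdf[OF p01])
  have "measure (M \<Otimes>\<^sub>M U01) (E2 \<inter> E1) = measure (M \<Otimes>\<^sub>M U01) E1"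
  proof (rule measure_eq_AE)
    show "AE x in M \<Otimes>\<^sub>M U01. (x \<in> E2 \<inter> E1) = (x \<in> E1)"
      using A2 by eventually_elim (auto simp: E1_def E2_def)
  qed (use E1s E2s in auto)
  then have "measure (M \<Otimes>\<^sub>M U01) (E2 - E1) = 0"
    using P.finite_measure_Diff'[OF E2s E1s] mE1 mE2 by simp
  then have "E2 - E1 \<in> null_sets (M \<Otimes>\<^sub>M U01)"
    using E1s E2s by (auto simp: P.emeasure_eq_measure null_sets_def)
  from AE_not_in[OF this] A2 AE_space
  show ?thesis
    by eventually_elim (auto simp: E1_def E2_def p_def)
qed

end




lemma underlying_from_DT:
  fixes I :: "'i set" and M :: "'w measure" and V W :: "'w \<Rightarrow> 'i \<Rightarrow> real"
    and Zf :: "'i \<Rightarrow> 'w \<Rightarrow> real"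
  assumes PM: "prob_space M"
    and mV: "V \<in> measurable M (RI I)" and mW: "W \<in> measurable M (RI I)"
    and dV: "distr M (RI I) V = \<rho>"
    and Zeq: "\<And>i \<omega>. i \<in> I \<Longrightarrow> \<omega> \<in> space M \<Longrightarrow> Zf i \<omega> = V \<omega> i + W \<omega> i"
    and sim: "\<forall>i\<in>I. AE q in M \<Otimes>\<^sub>M M. (V (fst q) i - V (snd q) i) * (W (fst q) i - W (snd q) i) \<ge> 0"
    and dtf: "\<And>i. i \<in> I \<Longrightarrow> dtf M (Zf i)"
  shows "underlying_copula I (distr (M \<Otimes>\<^sub>M U01) (RI I) (\<lambda>w. \<lambda>i\<in>I. DT M (Zf i) w)) \<rho>"
  unfolding underlying_copula_def
proof (intro allI impI)
  fix J and x :: "'i \<Rightarrow> real"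
  assume J: "finite J" "J \<subseteq> I"
  interpret PM: prob_space M by (rule PM)
  interpret U: prob_space U01 by (rule prob_U01)
  have PMU: "prob_space (M \<Otimes>\<^sub>M U01)" by (rule prob_space_pair[OF PM prob_U01])
  interpret P: prob_space "M \<Otimes>\<^sub>M U01" by (rule PMU)
  define C where "C = distr (M \<Otimes>\<^sub>M U01) (RI I) (\<lambda>w. \<lambda>i\<in>I. DT M (Zf i) w)"
  have mU: "(\<lambda>w. \<lambda>i\<in>I. DT M (Zf i) w) \<in> measurable (M \<Otimes>\<^sub>M U01) (RI I)"
    by (rule measurable_restrict) (rule dtf.DT_meas[OF dtf])
  have sC: "sets C = sets (RI I)" unfolding C_def by simp
  have s\<rho>: "sets \<rho> = sets (RI I)" using dV by auto
  have mVi: "\<And>i. i \<in> I \<Longrightarrow> (\<lambda>\<omega>. V \<omega> i) \<in> borel_measurable M"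
    using measurable_compose[OF mV measurable_component_singleton] by simp
  have mWi: "\<And>i. i \<in> I \<Longrightarrow> (\<lambda>\<omega>. W \<omega> i) \<in> borel_measurable M"
    using measurable_compose[OF mW measurable_component_singleton] by simp
  have Vsp: "\<And>\<omega>. \<omega> \<in> space M \<Longrightarrow> V \<omega> \<in> space (RI I)" using mV by (rule measurable_space)
  have cdf1V: "\<And>j t. j \<in> I \<Longrightarrow> cdf1 \<rho> j t = measure M {\<omega>\<in>space M. V \<omega> j \<le> t}"
  proof -
    fix j t assume j: "j \<in> I"
    have "cdf1 \<rho> j t = measure \<rho> {y\<in>space \<rho>. y j \<le> t}" by (rule cdf1_meas[OF s\<rho> j])
    also have "\<dots> = measure M {\<omega>\<in>space M. V \<omega> j \<le> t}"
      unfolding dV[symmetric] using j Vsp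
      by (subst measure_distr[OF mV]) (auto intro!: arg_cong[where f="measure M"] RI_le_sets)
    finally show "cdf1 \<rho> j t = measure M {\<omega>\<in>space M. V \<omega> j \<le> t}" .
  qed
  define c where "c j = cdf1 \<rho> j (x j)" for j
  have box: "{y\<in>space (RI I). \<forall>j\<in>J. y j \<le> c j} \<in> sets (RI I)" by (rule RI_box_sets[OF J])
  have "cdfJ C J c = measure C {y\<in>space C. \<forall>j\<in>J. y j \<le> c j}" by (rule cdfJ_meas[OF sC J])
  also have "\<dots> = measure (M \<Otimes>\<^sub>M U01) {w\<in>space (M \<Otimes>\<^sub>M U01). \<forall>j\<in>J. DT M (Zf j) w \<le> c j}"
    unfolding C_def using J box
    by (subst measure_distr[OF mU]) (auto intro!: arg_cong[where f="measure (M \<Otimes>\<^sub>M U01)"] simp: space_PiM)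
  also have "\<dots> = measure (M \<Otimes>\<^sub>M U01) {w\<in>space (M \<Otimes>\<^sub>M U01). \<forall>j\<in>J. V (fst w) j \<le> x j}"
  proof (rule measure_eq_AE)
    have "AE w in M \<Otimes>\<^sub>M U01. \<forall>j\<in>J. (V (fst w) j \<le> x j) \<longleftrightarrow> (DT M (Zf j) w \<le> c j)"
    proof (rule AE_finite_allI[OF J(1)])
      fix j assume "j \<in> J"
      then have j: "j \<in> I" using J by auto
      have "AE w in M \<Otimes>\<^sub>M U01. (V (fst w) j \<le> x j) \<longleftrightarrow> (DT M (Zf j) w \<le> measure M {\<omega>\<in>space M. V \<omega> j \<le> x j})"
        by (rule dtf.DT_ord[OF dtf[OF j] mVi[OF j] mWi[OF j]]) (use Zeq j sim in auto)
      then show "AE w in M \<Otimes>\<^sub>M U01. (V (fst w) j \<le> x j) \<longleftrightarrow> (DT M (Zf j) w \<le> c j)"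
        unfolding c_def cdf1V[OF j] .
    qed
    then show "AE w in M \<Otimes>\<^sub>M U01. (w \<in> {w\<in>space (M \<Otimes>\<^sub>M U01). \<forall>j\<in>J. DT M (Zf j) w \<le> c j}) =
        (w \<in> {w\<in>space (M \<Otimes>\<^sub>M U01). \<forall>j\<in>J. V (fst w) j \<le> x j})"
      by eventually_elim auto
    show "{w\<in>space (M \<Otimes>\<^sub>M U01). \<forall>j\<in>J. DT M (Zf j) w \<le> c j} \<in> sets (M \<Otimes>\<^sub>M U01)"
      using J by (intro sets.sets_Collect_finite_All le_sets_of_meas dtf.DT_meas[OF dtf]) auto
    show "{w\<in>space (M \<Otimes>\<^sub>M U01). \<forall>j\<in>J. V (fst w) j \<le> x j} \<in> sets (M \<Otimes>\<^sub>M U01)"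
      using J by (intro sets.sets_Collect_finite_All le_sets_of_meas measurable_compose[OF measurable_fst mVi]) auto
  qed
  also have "\<dots> = measure M {\<omega>\<in>space M. \<forall>j\<in>J. V \<omega> j \<le> x j}"
  proof -
    have e: "{w\<in>space (M \<Otimes>\<^sub>M U01). \<forall>j\<in>J. V (fst w) j \<le> x j} = {\<omega>\<in>space M. \<forall>j\<in>J. V \<omega> j \<le> x j} \<times> {0..1}"
      by (auto simp: space_pair_measure)
    have s: "{\<omega>\<in>space M. \<forall>j\<in>J. V \<omega> j \<le> x j} \<in> sets M"
      using J by (intro sets.sets_Collect_finite_All le_sets_of_meas mVi) auto
    show ?thesis unfolding e
      by (subst rect_meas[OF PM.finite_measure_axioms s sets_U01_Icc]) (auto simp: measure_U01_Icc)
  qed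
  also have "\<dots> = measure \<rho> {y\<in>space \<rho>. \<forall>j\<in>J. y j \<le> x j}"
  proof -
    have b2: "{y\<in>space (RI I). \<forall>j\<in>J. y j \<le> x j} \<in> sets (RI I)" by (rule RI_box_sets[OF J])
    show ?thesis unfolding dV[symmetric] using J Vsp b2
      by (subst measure_distr[OF mV]) (auto intro!: arg_cong[where f="measure M"])
  qed
  also have "\<dots> = cdfJ \<rho> J x" by (rule cdfJ_meas[OF s\<rho> J, symmetric])
  finally show "cdfJ (distr (M \<Otimes>\<^sub>M U01) (RI I) (\<lambda>w. \<lambda>i\<in>I. DT M (Zf i) w)) J (\<lambda>j. cdf1 \<rho> j (x j)) = cdfJ \<rho> J x"
    unfolding C_def c_def .
qed

lemma dir2:
  fixes I :: "'i set" and \<mu> \<nu> :: "('i \<Rightarrow> real) measure" and M :: "'w measure"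
  assumes so: "similarly_ordered_coupling I \<mu> \<nu> M X Y"
  shows "\<exists>C. copula_measure I C \<and> underlying_copula I C \<mu> \<and> underlying_copula I C \<nu>"
proof -
  have PM: "prob_space M" and mX: "X \<in> measurable M (RI I)" and mY: "Y \<in> measurable M (RI I)"
    and dX: "distr M (RI I) X = \<mu>" and dY: "distr M (RI I) Y = \<nu>"
    and sim: "\<forall>i\<in>I. AE p in M \<Otimes>\<^sub>M M. (X (fst p) i - X (snd p) i) * (Y (fst p) i - Y (snd p) i) \<ge> 0"
    using so unfolding similarly_ordered_coupling_def by auto
  interpret PM: prob_space M by (rule PM)
  have PMU: "prob_space (M \<Otimes>\<^sub>M U01)" by (rule prob_space_pair[OF PM prob_U01])
  interpret P: prob_space "M \<Otimes>\<^sub>M U01" by (rule PMU)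
  have mXi: "\<And>i. i \<in> I \<Longrightarrow> (\<lambda>\<omega>. X \<omega> i) \<in> borel_measurable M"
    using measurable_compose[OF mX measurable_component_singleton] by simp
  have mYi: "\<And>i. i \<in> I \<Longrightarrow> (\<lambda>\<omega>. Y \<omega> i) \<in> borel_measurable M"
    using measurable_compose[OF mY measurable_component_singleton] by simp
  define Zf where "Zf i \<omega> = X \<omega> i + Y \<omega> i" for i \<omega>
  have dtf: "\<And>i. i \<in> I \<Longrightarrow> dtf M (Zf i)"
    unfolding dtf_def dtf_axioms_def Zf_def using PM mXi mYi by auto
  define C where "C = distr (M \<Otimes>\<^sub>M U01) (RI I) (\<lambda>w. \<lambda>i\<in>I. DT M (Zf i) w)"
  have mU: "(\<lambda>w. \<lambda>i\<in>I. DT M (Zf i) w) \<in> measurable (M \<Otimes>\<^sub>M U01) (RI I)"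
    by (rule measurable_restrict) (rule dtf.DT_meas[OF dtf])
  have pC: "prob_space C" unfolding C_def by (rule P.prob_space_distr[OF mU])
  have sC: "sets C = sets (RI I)" unfolding C_def by simp
  have margC: "marg1 C i = uniform_measure lborel {0..1}" if i: "i \<in> I" for i
  proof -
    have "marg1 C i = distr (M \<Otimes>\<^sub>M U01) borel ((\<lambda>y. y i) \<circ> (\<lambda>w. \<lambda>i\<in>I. DT M (Zf i) w))"
      unfolding marg1_def C_def by (rule distr_distr[OF measurable_component_singleton[OF i] mU])
    also have "(\<lambda>y. y i) \<circ> (\<lambda>w. \<lambda>i\<in>I. DT M (Zf i) w) = DT M (Zf i)" using i by (auto simp: fun_eq_iff)
    also have "distr (M \<Otimes>\<^sub>M U01) borel (DT M (Zf i)) = uniform_measure lborel {0..1}"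
      by (rule dtf.DT_uniform[OF dtf[OF i]])
    finally show ?thesis .
  qed
  have cop: "copula_measure I C" unfolding copula_measure_def using pC sC margC by auto
  have u1: "underlying_copula I C \<mu>" unfolding C_def
    by (rule underlying_from_DT[OF PM mX mY dX _ sim dtf]) (auto simp: Zf_def)
  have sim': "\<forall>i\<in>I. AE q in M \<Otimes>\<^sub>M M. (Y (fst q) i - Y (snd q) i) * (X (fst q) i - X (snd q) i) \<ge> 0"
    using sim by (simp add: mult.commute)
  have u2: "underlying_copula I C \<nu>" unfolding C_def
    by (rule underlying_from_DT[OF PM mY mX dY _ sim' dtf]) (auto simp: Zf_def)
  show ?thesis using cop u1 u2 by blast
qed



theorem lemma2p6:
  fixes I :: "'i set" and \<mu> \<nu> :: "('i \<Rightarrow> real) measure"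
  assumes "prob_space \<mu>" and "sets \<mu> = sets (RI I)"
      and "prob_space \<nu>" and "sets \<nu> = sets (RI I)"
  shows "((\<exists>C. copula_measure I C \<and> underlying_copula I C \<mu> \<and> underlying_copula I C \<nu>)
            \<longrightarrow> (\<exists>(M :: (('i \<Rightarrow> real) \<times> ('i \<Rightarrow> real)) measure) X Y.
                   similarly_ordered_coupling I \<mu> \<nu> M X Y))
       \<and> ((\<exists>(M :: 'w measure) X Y. similarly_ordered_coupling I \<mu> \<nu> M X Y)
            \<longrightarrow> (\<exists>C. copula_measure I C \<and> underlying_copula I C \<mu> \<and> underlying_copula I C \<nu>))"
proof (intro conjI impI)
  assume "\<exists>C. copula_measure I C \<and> underlying_copula I C \<mu> \<and> underlying_copula I C \<nu>"
  then obtain C where "copula_measure I C" "underlying_copula I C \<mu>" "underlying_copula I C \<nu>" by blast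
  then show "\<exists>(M :: (('i \<Rightarrow> real) \<times> ('i \<Rightarrow> real)) measure) X Y. similarly_ordered_coupling I \<mu> \<nu> M X Y"
    by (rule dir1[OF assms])
next
  assume "\<exists>(M :: 'w measure) X Y. similarly_ordered_coupling I \<mu> \<nu> M X Y"
  then obtain M :: "'w measure" and X Y where "similarly_ordered_coupling I \<mu> \<nu> M X Y" by blast
  then show "\<exists>C. copula_measure I C \<and> underlying_copula I C \<mu> \<and> underlying_copula I C \<nu>"
    by (rule dir2)
qed

end
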